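(* The cone $\Omega$ has dimension $15$, the maximal possible (equal to $\operatorname{rank}A$).
   Context: Kummer surface. Let $C$ be a very general smooth projective curve of genus 2, $J(C)$ its Jacobian, and $S$ the minimal resolution of the Kummer quartic $J(C)/\{\pm1\}\subset\mathbb{P}^3$; $S$ is a K3 surface of Picard number 17 and $NS(S)=\mathrm{Pic}(S)$. The group $J(C)_2$ is indexed as $\{0\}\cup\{ij:1\le i<j\le 6\}$ (unordered pairs, also $0=66$), with $0$ the identity, $ij+jk=ik$, and $ij+kl=mn$ whenever $\{i,j,k,l,m,n\}=\{1,\dots,6\}$. For $\alpha\in J(C)_2$, $N_\alpha$ is the exceptional $(-2)$-curve over the node indexed by $\alpha$ and $T_\alpha$ is the trope indexed by $\alpha$ (a smooth rational $(-2)$-curve). Each $T_\beta$ meets exactly the six $N_\alpha$ with $\alpha\in I(T_\beta)$, where $I(T_0)=\{0,16,26,36,46,56\}$, $I(T_{i6})=\{0,i6,ij,ik,il,im\}$, $I(T_{ij})=\{i6,j6,ij,kl,km,lm\}$ for $\{i,j,k,l,m\}=\{1,\dots,5\}$. $\Lambda$ is the pullback of the hyperplane class; $\Lambda^2=4$, $N_\alpha^2=-2$, $\Lambda\cdot N_\alpha=0$, $N_\alpha\cdot N_\beta=0$ for $\alpha\neq\beta$, and $T_\beta=\tfrac12(\Lambda-\sum_{\alpha\in I(T_\beta)}N_\alpha)$. The switch $\sigma$ is the involution of $S$ with $N_\alpha\leftrightarrow T_\alpha$, $\Lambda\mapsto3\Lambda-\sum_\alpha N_\alpha$. A Göpel tetrad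 is a 4-element subset $g\subset J(C)_2$ no three elements of which lie in a common $I(T_\beta)$. A Weber hexad is a 6-element subset $w\subset J(C)_2$ no four elements of which lie in a common $I(T_\beta)$ or a common Göpel tetrad. $r_g:=\Lambda-\sum_{\alpha\in g}N_\alpha$, $r_w:=3\Lambda-2\sum_{\alpha\in w}N_\alpha$. Lattices. $R:=T_0$; $b:=\tfrac12\big(3\Lambda-\sum_{i=1}^6N_{i6}-2\sum_{1\le i<j\le5}N_{ij}\big)$; $B:=\mathbb{Z}b+\mathbb{Z}R$; $A:=B^\perp\subset NS(S)$ (rank 15). Domain: $P(S)$ is the component of $\{x^2>0\}$ in $NS(S)\otimes\mathbb{R}$ containing ample classes; $D':=\{x\in P(S): x\cdot r>0$ for all $r$ among $N_\alpha,T_\alpha,\Lambda-2N_\alpha,\sigma(\Lambda-2N_\alpha)$ ($\alpha\in J(C)_2$), $r_g$ (all 60 Göpel tetrads), $r_w$ (all 192 Weber hexads)$\}$; $\Omega:=\overline{D'}\cap(A\otimes\mathbb{R})$. *)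

theory Defs
  imports "HOL-Analysis.Analysis"
begin

text \<open>An element of J(C)_2 is encoded as a set of naturals: the identity 0 (= 66) is the
empty set, and the element ij (1 <= i < j <= 6) is the unordered pair {i,j}.\<close>

definition J2 :: "nat set set" where
  "J2 = insert {} {{i, j} | i j. 1 \<le> i \<and> i < j \<and> j \<le> 6}"

definition Itrope :: "nat set \<Rightarrow> nat set set" where
  "Itrope beta =
    (if beta = {} then insert {} {{i, 6} | i. 1 \<le> i \<and> i \<le> 5}
     else if 6 \<in> beta then
       (let i = the_elem (beta - {6}) in
          {{}, beta} \<union> {{i, j} | j. 1 \<le> j \<and> j \<le> 5 \<and> j \<noteq> i})
     else
       {beta - {i} \<union> {6} | i. i \<in> beta} \<union> {beta}
       \<union> {{k, l} | k l. 1 \<le> k \<and> k < l \<and> l \<le> 5 \<and> k \<notin> beta \<and> l \<notin> beta})"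

definition goepel :: "nat set set \<Rightarrow> bool" where
  "goepel g \<longleftrightarrow> g \<subseteq> J2 \<and> card g = 4 \<and> (\<forall>beta\<in>J2. card (g \<inter> Itrope beta) \<le> 2)"

definition weber :: "nat set set \<Rightarrow> bool" where
  "weber w \<longleftrightarrow> w \<subseteq> J2 \<and> card w = 6
     \<and> (\<forall>beta\<in>J2. card (w \<inter> Itrope beta) \<le> 3)
     \<and> (\<forall>g. goepel g \<longrightarrow> card (w \<inter> g) \<le> 3)"

typedef kidx = "insert None (Some ` J2)" by blast

instance kidx :: finite
proof
  have "finite J2" unfolding J2_def
  proof -
    have "{{i, j} | i j. 1 \<le> i \<and> i < j \<and> j \<le> (6::nat)} \<subseteq> (\<lambda>(i,j). {i,j}) ` ({..6} \<times> {..6})"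
      by auto
    then show "finite (insert {} {{i, j} | i j. 1 \<le> i \<and> i < j \<and> j \<le> (6::nat)})"
      by (meson finite_SigmaI finite_atMost finite_imageI finite_insert finite_subset)
  qed
  then have "finite (insert None (Some ` J2))" by simp
  then have "finite (Abs_kidx ` insert None (Some ` J2))" by simp
  moreover have "UNIV = Abs_kidx ` insert None (Some ` J2)"
    using type_definition.Abs_image[OF type_definition_kidx] by simp
  ultimately show "finite (UNIV :: kidx set)" by metis
qed

type_synonym NSR = "real ^ kidx"

definition Lam :: NSR where "Lam = axis (Abs_kidx None) 1"
definition Nd :: "nat set \<Rightarrow> NSR" where "Nd a = axis (Abs_kidx (Some a)) 1"

definition ip :: "NSR \<Rightarrow> NSR \<Rightarrow> real" where
  "ip x y = 4 * (x $ Abs_kidx None) * (y $ Abs_kidx None)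
      - 2 * (\<Sum>a\<in>J2. (x $ Abs_kidx (Some a)) * (y $ Abs_kidx (Some a)))"

definition Tr :: "nat set \<Rightarrow> NSR" where
  "Tr b = (1/2) *\<^sub>R (Lam - (\<Sum>a\<in>Itrope b. Nd a))"

definition switch :: "NSR \<Rightarrow> NSR" where
  "switch x = (x $ Abs_kidx None) *\<^sub>R (3 *\<^sub>R Lam - (\<Sum>a\<in>J2. Nd a))
              + (\<Sum>a\<in>J2. (x $ Abs_kidx (Some a)) *\<^sub>R Tr a)"

definition r_goepel :: "nat set set \<Rightarrow> NSR" where
  "r_goepel g = Lam - (\<Sum>a\<in>g. Nd a)"

definition r_weber :: "nat set set \<Rightarrow> NSR" where
  "r_weber w = 3 *\<^sub>R Lam - 2 *\<^sub>R (\<Sum>a\<in>w. Nd a)"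

definition walls :: "NSR set" where
  "walls = Nd ` J2 \<union> Tr ` J2 \<union> (\<lambda>a. Lam - 2 *\<^sub>R Nd a) ` J2
     \<union> (\<lambda>a. switch (Lam - 2 *\<^sub>R Nd a)) ` J2
     \<union> r_goepel ` {g. goepel g} \<union> r_weber ` {w. weber w}"

text \<open>Positive cone component containing the ample classes = the one containing Lambda
(Lambda is nef with Lambda^2 = 4 > 0, hence lies in the closure of the ample cone).\<close>
definition Pcone :: "NSR set" where
  "Pcone = {x. ip x x > 0 \<and> ip x Lam > 0}"

definition Dprime :: "NSR set" where
  "Dprime = {x \<in> Pcone. \<forall>r\<in>walls. ip x r > 0}"

definition Rcls :: NSR where "Rcls = Tr {}"

definition bcls :: NSR where
  "bcls = (1/2) *\<^sub>R (3 *\<^sub>R Lam - (\<Sum>i\<in>{1..6::nat}. Nd (if i = 6 then {} else {i, 6}))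
            - 2 *\<^sub>R (\<Sum>p\<in>{{i, j} | i j. 1 \<le> i \<and> i < j \<and> j \<le> (5::nat)}. Nd p))"

text \<open>A tensor R = orthogonal complement of B = Zb + ZR in NS(S) tensor R.\<close>
definition AR :: "NSR set" where
  "AR = {x. ip x bcls = 0 \<and> ip x Rcls = 0}"

definition Omega :: "NSR set" where
  "Omega = closure Dprime \<inter> AR"

end

theory Submission
  imports Defs
begin


lemma pairs_set: "{(i, j). 1 \<le> i \<and> i < j \<and> j \<le> (6::nat)} =
  {(1,2),(1,3),(1,4),(1,5),(1,6),(2,3),(2,4),(2,5),(2,6),(3,4),(3,5),(3,6),(4,5),(4,6),(5,6)}"
  (is "_ = ?R")
proof (intro equalityI subsetI)
  fix p assume "p \<in> {(i, j). 1 \<le> i \<and> i < j \<and> j \<le> (6::nat)}"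
  then obtain i j where p: "p = (i,j)" and h: "1 \<le> i \<and> i < j \<and> j \<le> 6" by auto
  then have "j = 2 \<or> j = 3 \<or> j = 4 \<or> j = 5 \<or> j = 6" by linarith
  then show "p \<in> ?R" using h unfolding p by (elim disjE; simp; linarith)
qed auto

lemma J2_eq: "J2 = {{},{1,2},{1,3},{1,4},{1,5},{1,6},{2,3},{2,4},{2,5},{2,6},{3,4},{3,5},{3,6},{4,5},{4,6},{5,6}}"
proof -
  have "{{i, j} | i j. 1 \<le> i \<and> i < j \<and> j \<le> (6::nat)} = (\<lambda>(i,j). {i,j}) ` {(i, j). 1 \<le> i \<and> i < j \<and> j \<le> (6::nat)}"
    by auto
  then show ?thesis unfolding J2_def pairs_set by simp
qed

lemma card_J2: "card J2 = 16"
  unfolding J2_eq by (simp add: doubleton_eq_iff)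

lemma fin_J2: "finite J2" unfolding J2_eq by simp


lemma c2: "{beta - {i} \<union> {6::nat} | i. i \<in> beta} = (\<lambda>i. beta - {i} \<union> {6}) ` beta" by auto

lemma pairs5: "{(k,l). 1 \<le> k \<and> k < l \<and> l \<le> (5::nat)} = {(1,2),(1,3),(1,4),(1,5),(2,3),(2,4),(2,5),(3,4),(3,5),(4,5)}"
  (is "_ = ?R")
proof (intro equalityI subsetI)
  fix p assume "p \<in> {(i, j). 1 \<le> i \<and> i < j \<and> j \<le> (5::nat)}"
  then obtain i j where p: "p = (i,j)" and h: "1 \<le> i \<and> i < j \<and> j \<le> 5" by auto
  then have "j = 2 \<or> j = 3 \<or> j = 4 \<or> j = 5" by linarith
  then show "p \<in> ?R" using h unfolding p by (elim disjE; simp; linarith)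
qed auto

lemma c3: "{{k, l} | k l. 1 \<le> k \<and> k < l \<and> l \<le> (5::nat) \<and> k \<notin> beta \<and> l \<notin> beta}
  = (\<Union>p\<in>{(k,l). 1 \<le> k \<and> k < l \<and> l \<le> (5::nat)}.
        (case p of (k,l) \<Rightarrow> if k \<notin> beta \<and> l \<notin> beta then {{k,l}} else {}))"
  apply (auto split: if_splits) by blast
lemma c1: "{{i, j} | j. 1 \<le> j \<and> j \<le> (5::nat) \<and> j \<noteq> i} = (\<lambda>j. {i,j}) ` ({1,2,3,4,5} - {i})"
proof -
  have "{1..(5::nat)} = {1,2,3,4,5}" by auto
  then show ?thesis by auto
qed

lemma I0_eq: "Itrope {} = {{},{1,6},{2,6},{3,6},{4,6},{5,6}}"
proof -
  have a: "{{i, 6} | i. 1 \<le> i \<and> i \<le> (5::nat)} = (\<lambda>i. {i,6}) ` {1..5}" by auto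
  have b: "{1..(5::nat)} = {1,2,3,4,5}" by auto
  have "Itrope {} = insert {} {{i, 6} | i. 1 \<le> i \<and> i \<le> (5::nat)}"
    unfolding Itrope_def by (simp only: if_True refl simp_thms)
  also have "\<dots> = {{},{1,6},{2,6},{3,6},{4,6},{5,6}}" unfolding a b by (simp only: image_insert image_empty)
  finally show ?thesis .
qed

lemma It6: "i \<noteq> 6 \<Longrightarrow> Itrope {i,6} = {{}, {i,6}} \<union> (\<lambda>j. {i,j}) ` ({1,2,3,4,5} - {i})"
  unfolding Itrope_def c1 Let_def by (simp add: insert_Diff_if)

lemma Itp: assumes "i \<noteq> 6" "j \<noteq> 6" "i \<noteq> j"
  shows "Itrope {i,j} = {{j,6},{i,6},{i,j}} \<union> (\<Union>p\<in>{(1,2),(1,3),(1,4),(1,5),(2,3),(2,4),(2,5),(3,4),(3,5),(4,5)}.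
        (case p of (k,l) \<Rightarrow> if k \<notin> {i,j} \<and> l \<notin> {i,j} then {{k,l}} else {}))"
proof -
  have ne: "{i,j} \<noteq> {}" by simp
  have n6: "6 \<notin> {i,j}" using assms by simp
  have e1: "{i,j} - {i} \<union> {6} = {j,6}" and e2: "{i,j} - {j} \<union> {6} = {i,6}" using assms by auto
  show ?thesis
    unfolding Itrope_def c2 c3 pairs5 if_not_P[OF ne] if_not_P[OF n6] image_insert image_empty e1 e2
    by blast
qed

lemma It_1_2: "Itrope {1,2} = {{4,5},{3,5},{3,4},{2,6},{1,6},{1,2}}"
  by (subst Itp) simp_all

lemma It_1_3: "Itrope {1,3} = {{4,5},{2,5},{2,4},{3,6},{1,6},{1,3}}"
  by (subst Itp) simp_all

lemma It_1_4: "Itrope {1,4} = {{3,5},{2,5},{2,3},{4,6},{1,6},{1,4}}"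
  by (subst Itp) simp_all

lemma It_1_5: "Itrope {1,5} = {{3,4},{2,4},{2,3},{5,6},{1,6},{1,5}}"
  by (subst Itp) simp_all

lemma It_1_6: "Itrope {1,6} = {{1,2},{1,3},{1,4},{1,5},{},{1,6}}"
  by (subst It6) (simp_all add: insert_Diff_if)

lemma It_2_3: "Itrope {2,3} = {{4,5},{1,5},{1,4},{3,6},{2,6},{2,3}}"
  by (subst Itp) simp_all

lemma It_2_4: "Itrope {2,4} = {{3,5},{1,5},{1,3},{4,6},{2,6},{2,4}}"
  by (subst Itp) simp_all

lemma It_2_5: "Itrope {2,5} = {{3,4},{1,4},{1,3},{5,6},{2,6},{2,5}}"
  by (subst Itp) simp_all

lemma It_2_6: "Itrope {2,6} = {{2,1},{2,3},{2,4},{2,5},{},{2,6}}"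
  by (subst It6) (simp_all add: insert_Diff_if)

lemma It_3_4: "Itrope {3,4} = {{2,5},{1,5},{1,2},{4,6},{3,6},{3,4}}"
  by (subst Itp) simp_all

lemma It_3_5: "Itrope {3,5} = {{2,4},{1,4},{1,2},{5,6},{3,6},{3,5}}"
  by (subst Itp) simp_all

lemma It_3_6: "Itrope {3,6} = {{3,1},{3,2},{3,4},{3,5},{},{3,6}}"
  by (subst It6) (simp_all add: insert_Diff_if)

lemma It_4_5: "Itrope {4,5} = {{2,3},{1,3},{1,2},{5,6},{4,6},{4,5}}"
  by (subst Itp) simp_all

lemma It_4_6: "Itrope {4,6} = {{4,1},{4,2},{4,3},{4,5},{},{4,6}}"
  by (subst It6) (simp_all add: insert_Diff_if)

lemma It_5_6: "Itrope {5,6} = {{5,1},{5,2},{5,3},{5,4},{},{5,6}}"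
  by (subst It6) (simp_all add: insert_Diff_if)
lemma F_1_2: "Itrope {1,2} \<subseteq> J2 \<and> card (Itrope {1,2}) = 6 \<and> card (Itrope {1,2} \<inter> Itrope {}) \<le> 2"
  unfolding It_1_2 I0_eq J2_eq by (simp add: doubleton_eq_iff)

lemma F_1_3: "Itrope {1,3} \<subseteq> J2 \<and> card (Itrope {1,3}) = 6 \<and> card (Itrope {1,3} \<inter> Itrope {}) \<le> 2"
  unfolding It_1_3 I0_eq J2_eq by (simp add: doubleton_eq_iff)

lemma F_1_4: "Itrope {1,4} \<subseteq> J2 \<and> card (Itrope {1,4}) = 6 \<and> card (Itrope {1,4} \<inter> Itrope {}) \<le> 2"
  unfolding It_1_4 I0_eq J2_eq by (simp add: doubleton_eq_iff)

lemma F_1_5: "Itrope {1,5} \<subseteq> J2 \<and> card (Itrope {1,5}) = 6 \<and> card (Itrope {1,5} \<inter> Itrope {}) \<le> 2"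
  unfolding It_1_5 I0_eq J2_eq by (simp add: doubleton_eq_iff)

lemma F_1_6: "Itrope {1,6} \<subseteq> J2 \<and> card (Itrope {1,6}) = 6 \<and> card (Itrope {1,6} \<inter> Itrope {}) \<le> 2"
  unfolding It_1_6 I0_eq J2_eq by (simp add: doubleton_eq_iff)

lemma F_2_3: "Itrope {2,3} \<subseteq> J2 \<and> card (Itrope {2,3}) = 6 \<and> card (Itrope {2,3} \<inter> Itrope {}) \<le> 2"
  unfolding It_2_3 I0_eq J2_eq by (simp add: doubleton_eq_iff)

lemma F_2_4: "Itrope {2,4} \<subseteq> J2 \<and> card (Itrope {2,4}) = 6 \<and> card (Itrope {2,4} \<inter> Itrope {}) \<le> 2"
  unfolding It_2_4 I0_eq J2_eq by (simp add: doubleton_eq_iff)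

lemma F_2_5: "Itrope {2,5} \<subseteq> J2 \<and> card (Itrope {2,5}) = 6 \<and> card (Itrope {2,5} \<inter> Itrope {}) \<le> 2"
  unfolding It_2_5 I0_eq J2_eq by (simp add: doubleton_eq_iff)

lemma F_2_6: "Itrope {2,6} \<subseteq> J2 \<and> card (Itrope {2,6}) = 6 \<and> card (Itrope {2,6} \<inter> Itrope {}) \<le> 2"
  unfolding It_2_6 I0_eq J2_eq by (simp add: doubleton_eq_iff)

lemma F_3_4: "Itrope {3,4} \<subseteq> J2 \<and> card (Itrope {3,4}) = 6 \<and> card (Itrope {3,4} \<inter> Itrope {}) \<le> 2"
  unfolding It_3_4 I0_eq J2_eq by (simp add: doubleton_eq_iff)

lemma F_3_5: "Itrope {3,5} \<subseteq> J2 \<and> card (Itrope {3,5}) = 6 \<and> card (Itrope {3,5} \<inter> Itrope {}) \<le> 2"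
  unfolding It_3_5 I0_eq J2_eq by (simp add: doubleton_eq_iff)

lemma F_3_6: "Itrope {3,6} \<subseteq> J2 \<and> card (Itrope {3,6}) = 6 \<and> card (Itrope {3,6} \<inter> Itrope {}) \<le> 2"
  unfolding It_3_6 I0_eq J2_eq by (simp add: doubleton_eq_iff)

lemma F_4_5: "Itrope {4,5} \<subseteq> J2 \<and> card (Itrope {4,5}) = 6 \<and> card (Itrope {4,5} \<inter> Itrope {}) \<le> 2"
  unfolding It_4_5 I0_eq J2_eq by (simp add: doubleton_eq_iff)

lemma F_4_6: "Itrope {4,6} \<subseteq> J2 \<and> card (Itrope {4,6}) = 6 \<and> card (Itrope {4,6} \<inter> Itrope {}) \<le> 2"
  unfolding It_4_6 I0_eq J2_eq by (simp add: doubleton_eq_iff)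

lemma F_5_6: "Itrope {5,6} \<subseteq> J2 \<and> card (Itrope {5,6}) = 6 \<and> card (Itrope {5,6} \<inter> Itrope {}) \<le> 2"
  unfolding It_5_6 I0_eq J2_eq by (simp add: doubleton_eq_iff)

lemma F_0: "Itrope {} \<subseteq> J2 \<and> card (Itrope {}) = 6"
  unfolding I0_eq J2_eq by (simp add: doubleton_eq_iff)

lemma Itrope_facts: "b \<in> J2 \<Longrightarrow> Itrope b \<subseteq> J2 \<and> card (Itrope b) = 6 \<and> (b \<noteq> {} \<longrightarrow> card (Itrope b \<inter> Itrope {}) \<le> 2)"
proof -
  assume "b \<in> J2"
  then have "b = {} \<or> b = {1,2} \<or> b = {1,3} \<or> b = {1,4} \<or> b = {1,5} \<or> b = {1,6} \<or> b = {2,3} \<or> b = {2,4} \<or> b = {2,5} \<or> b = {2,6} \<or> b = {3,4} \<or> b = {3,5} \<or> b = {3,6} \<or> b = {4,5} \<or> b = {4,6} \<or> b = {5,6}" unfolding J2_eq by simp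
  then show ?thesis using F_0 F_1_2 F_1_3 F_1_4 F_1_5 F_1_6 F_2_3 F_2_4 F_2_5 F_2_6 F_3_4 F_3_5 F_3_6 F_4_5 F_4_6 F_5_6 by (elim disjE) simp_all
qed


abbreviation kN :: kidx where "kN \<equiv> Abs_kidx None"
abbreviation kS :: "nat set \<Rightarrow> kidx" where "kS a \<equiv> Abs_kidx (Some a)"

lemma kS_inj: "a \<in> J2 \<Longrightarrow> b \<in> J2 \<Longrightarrow> (kS a = kS b) \<longleftrightarrow> a = b"
  by (simp add: Abs_kidx_inject)

lemma kS_ne_kN: "a \<in> J2 \<Longrightarrow> kS a \<noteq> kN"
  by (simp add: Abs_kidx_inject)

lemma kN_ne_kS: "a \<in> J2 \<Longrightarrow> kN \<noteq> kS a"
  by (simp add: Abs_kidx_inject)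

lemma UNIV_kidx: "(UNIV :: kidx set) = insert kN (kS ` J2)"
  using type_definition.Abs_image[OF type_definition_kidx] by auto

lemma sum_kidx: "(\<Sum>k\<in>UNIV. f k) = f kN + (\<Sum>a\<in>J2. f (kS a))"
proof -
  have "(\<Sum>k\<in>UNIV. f k) = (\<Sum>k\<in>insert kN (kS ` J2). f k)" by (simp add: UNIV_kidx)
  also have "\<dots> = f kN + (\<Sum>k\<in>kS ` J2. f k)"
    by (rule sum.insert) (auto simp: fin_J2 kN_ne_kS)
  also have "(\<Sum>k\<in>kS ` J2. f k) = (\<Sum>a\<in>J2. f (kS a))"
    by (rule sum.reindex_cong[where l=kS]) (auto simp: inj_on_def kS_inj)
  finally show ?thesis .
qed

lemma card_kidx: "CARD(kidx) = 17"
proof -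
  have "card (kS ` J2) = 16" using card_J2 by (subst card_image) (auto simp: inj_on_def kS_inj)
  moreover have "kN \<notin> kS ` J2" using kN_ne_kS by auto
  ultimately show ?thesis unfolding UNIV_kidx using fin_J2 by simp
qed

definition Gv :: "NSR \<Rightarrow> NSR" where
  "Gv x = (\<chi> k. (if k = kN then 4 else -2) * x $ k)"

lemma ip_Gv: "ip x y = inner (Gv x) y"
proof -
  have "inner (Gv x) y = (\<Sum>k\<in>UNIV. (Gv x $ k) * (y $ k))" by (simp add: inner_vec_def)
  also have "\<dots> = 4 * x $ kN * y $ kN + (\<Sum>a\<in>J2. (-2) * x $ kS a * y $ kS a)"
    unfolding sum_kidx Gv_def by (auto simp: kS_ne_kN intro!: sum.cong)
  finally show ?thesis unfolding ip_def by (simp add: sum_distrib_left sum_negf algebra_simps)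
qed

lemma ip_sym: "ip x y = ip y x" unfolding ip_def by (simp add: mult.commute)

lemma ip_add2: "ip x (y + z) = ip x y + ip x z" by (simp add: ip_Gv inner_add_right)
lemma ip_diff2: "ip x (y - z) = ip x y - ip x z" by (simp add: ip_Gv inner_diff_right)
lemma ip_scale2: "ip x (r *\<^sub>R y) = r * ip x y" by (simp add: ip_Gv)
lemma ip_sum2: "ip x (sum f S) = (\<Sum>a\<in>S. ip x (f a))" by (simp add: ip_Gv inner_sum_right)

lemma ip_Lam: "ip x Lam = 4 * x $ kN"
  unfolding ip_Gv Lam_def inner_axis by (simp add: Gv_def)

lemma ip_Nd: "a \<in> J2 \<Longrightarrow> ip x (Nd a) = -2 * x $ kS a"
  unfolding ip_Gv Nd_def inner_axis by (simp add: Gv_def kS_ne_kN)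

lemma ip_Tr: "b \<in> J2 \<Longrightarrow> ip x (Tr b) = 2 * x $ kN + (\<Sum>a\<in>Itrope b. x $ kS a)"
proof -
  assume b: "b \<in> J2"
  have sub: "Itrope b \<subseteq> J2" using Itrope_facts[OF b] by simp
  have "ip x (Tr b) = (1/2) * (4 * x $ kN - (\<Sum>a\<in>Itrope b. -2 * x $ kS a))"
    unfolding Tr_def ip_scale2 ip_diff2 ip_Lam ip_sum2
    using sub by (simp add: ip_Nd subset_iff)
  then show ?thesis by (simp add: sum_distrib_left[symmetric] sum_negf)
qed

lemma Lam_kN: "Lam $ kN = 1" by (simp add: Lam_def)
lemma Lam_kS: "a \<in> J2 \<Longrightarrow> Lam $ kS a = 0" by (simp add: Lam_def axis_def kS_ne_kN)
lemma Nd_kN: "a \<in> J2 \<Longrightarrow> Nd a $ kN = 0" by (simp add: Nd_def axis_def kS_ne_kN[symmetric])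
lemma Nd_kS: "a \<in> J2 \<Longrightarrow> b \<in> J2 \<Longrightarrow> Nd a $ kS b = (if a = b then 1 else 0)"
  by (auto simp add: Nd_def axis_def kS_inj)

lemma switch_wall: assumes a: "a \<in> J2"
  shows "switch (Lam - 2 *\<^sub>R Nd a) = (3 *\<^sub>R Lam - (\<Sum>b\<in>J2. Nd b)) - 2 *\<^sub>R Tr a"
proof -
  have "(\<Sum>b\<in>J2. ((Lam - 2 *\<^sub>R Nd a) $ kS b) *\<^sub>R Tr b) = (\<Sum>b\<in>J2. (if b = a then -2 *\<^sub>R Tr b else 0))"
    using a by (intro sum.cong) (auto simp: Lam_kS Nd_kS)
  also have "\<dots> = -2 *\<^sub>R Tr a" using a fin_J2 by simp
  finally show ?thesis unfolding switch_def using a by (simp add: Lam_kN Nd_kN)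
qed



lemma I0_sub: "Itrope {} \<subseteq> J2" and card_I0: "card (Itrope {}) = 6"
  using F_0 by auto

lemma card_J2_I0: "card (J2 - Itrope {}) = 10"
  using card_Diff_subset[OF _ I0_sub] fin_J2 card_I0 card_J2 by (simp add: finite_subset[OF I0_sub])

lemma sum_if_card: "finite S \<Longrightarrow> (\<Sum>a\<in>S. if a \<in> T then (u::real) else 0) = u * card (S \<inter> T)"
proof -
  assume "finite S"
  have "(\<Sum>a\<in>S. if a \<in> T then u else 0) = (\<Sum>a\<in>S \<inter> T. u)"
    using \<open>finite S\<close> by (simp add: sum.inter_restrict[symmetric] Int_commute)
  then show ?thesis by simp
qed

lemma sum_lb: assumes "finite S" "\<And>a. a \<in> S \<Longrightarrow> (l::real) \<le> f a" shows "l * card S \<le> sum f S"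
proof -
  have "(\<Sum>a\<in>S. l) \<le> sum f S" by (rule sum_mono) (use assms in auto)
  then show ?thesis by (simp add: mult.commute)
qed

lemma good:
  fixes x :: NSR
  assumes t: "x $ kN \<ge> 29/2"
    and cneg: "\<And>a. a \<in> J2 \<Longrightarrow> x $ kS a < 0"
    and clo: "\<And>a. a \<in> J2 \<Longrightarrow> x $ kS a \<ge> -11/2"
    and clo2: "\<And>a. a \<in> J2 \<Longrightarrow> a \<notin> Itrope {} \<Longrightarrow> x $ kS a \<ge> -7/2"
    and R: "ip x Rcls > 0"
  shows "x \<in> Dprime"
proof -
  define t where "t = x $ kN"
  define I0 where "I0 = Itrope {}"
  define h where "h a = -(7/2) - (if a \<in> I0 then 2 else (0::real))" for a
  have hx: "h a \<le> x $ kS a" if "a \<in> J2" for a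
    using clo[OF that] clo2[OF that] unfolding h_def I0_def by auto
  have finJ: "finite J2" by (rule fin_J2)
  have sq: "(x $ kS a) * (x $ kS a) \<le> 49/4 + (if a \<in> I0 then 18 else 0)" if "a \<in> J2" for a
  proof -
    have "\<bar>x $ kS a\<bar> \<le> \<bar>7/2 + (if a \<in> I0 then 2 else 0)\<bar>"
      using hx[OF that] cneg[OF that] unfolding h_def by auto
    then have "(x $ kS a)^2 \<le> (7/2 + (if a \<in> I0 then 2 else 0))^2"
      using abs_le_square_iff by blast
    then show ?thesis by (auto simp: power2_eq_square split: if_splits)
  qed
  have "(\<Sum>a\<in>J2. (x $ kS a) * (x $ kS a)) \<le> (\<Sum>a\<in>J2. 49/4 + (if a \<in> I0 then 18 else 0))"
    by (rule sum_mono) (rule sq)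
  also have "\<dots> = 304"
    using sum_if_card[OF finJ, of I0 18] card_J2 card_I0 I0_sub
    by (simp add: sum.distrib I0_def Int_absorb1)
  finally have s304: "(\<Sum>a\<in>J2. (x $ kS a) * (x $ kS a)) \<le> 304" .
  have "ip x x = 4 * t * t - 2 * (\<Sum>a\<in>J2. (x $ kS a) * (x $ kS a))"
    unfolding ip_def t_def by simp
  moreover have "t * t \<ge> (29/2) * (29/2)" using t unfolding t_def by (intro mult_mono) auto
  ultimately have P1: "ip x x > 0" using s304 by linarith
  have P2: "ip x Lam > 0" using t by (simp add: ip_Lam)
  have WN: "ip x (Nd a) > 0" if "a \<in> J2" for a using cneg[OF that] by (simp add: ip_Nd that)
  have WT: "ip x (Tr b) > 0" if "b \<in> J2" for b
  proof (cases "b = {}")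
    case True then show ?thesis using R by (simp add: Rcls_def)
  next
    case False
    from Itrope_facts[OF that] False have sub: "Itrope b \<subseteq> J2" and c6: "card (Itrope b) = 6"
      and c2: "card (Itrope b \<inter> I0) \<le> 2" by (auto simp: I0_def)
    have fin: "finite (Itrope b)" using finite_subset[OF sub finJ] .
    have "(\<Sum>a\<in>Itrope b. h a) \<le> (\<Sum>a\<in>Itrope b. x $ kS a)"
      using sub by (intro sum_mono hx) auto
    moreover have "(\<Sum>a\<in>Itrope b. h a) = -21 - 2 * card (Itrope b \<inter> I0)"
      unfolding h_def using sum_if_card[OF fin, of I0 2] c6 by (simp add: sum_subtractf)
    ultimately show ?thesis using c2 t by (simp add: ip_Tr[OF that] t_def)
  qed
  have WL: "ip x (Lam - 2 *\<^sub>R Nd a) > 0" if "a \<in> J2" for a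
    using clo[OF that] t by (simp add: ip_diff2 ip_scale2 ip_Lam ip_Nd that)
  have WS: "ip x (switch (Lam - 2 *\<^sub>R Nd a)) > 0" if "a \<in> J2" for a
  proof -
    from Itrope_facts[OF that] have sub: "Itrope a \<subseteq> J2" and c6: "card (Itrope a) = 6" by auto
    have fin: "finite (Itrope a)" using finite_subset[OF sub finJ] .
    have cd: "card (J2 - Itrope a) = 10" using card_Diff_subset[OF fin sub] c6 card_J2 by simp
    have "(-11/2) * card (J2 - Itrope a) \<le> (\<Sum>b\<in>J2 - Itrope a. x $ kS b)"
      by (rule sum_lb) (use finJ clo in auto)
    then have L: "-55 \<le> (\<Sum>b\<in>J2. x $ kS b) - (\<Sum>b\<in>Itrope a. x $ kS b)"
      using cd sum_diff[OF finJ sub, of "\<lambda>b. x $ kS b"] by simp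
    have "ip x (switch (Lam - 2 *\<^sub>R Nd a)) = 12 * t + 2 * (\<Sum>b\<in>J2. x $ kS b) - 2 * (2 * t + (\<Sum>b\<in>Itrope a. x $ kS b))"
      unfolding switch_wall[OF that] ip_diff2 ip_scale2 ip_sum2 ip_Lam ip_Tr[OF that] t_def
      by (simp add: ip_Nd sum_distrib_left[symmetric] sum_negf cong: sum.cong)
    then have E: "ip x (switch (Lam - 2 *\<^sub>R Nd a)) = 8 * t + 2 * ((\<Sum>b\<in>J2. x $ kS b) - (\<Sum>b\<in>Itrope a. x $ kS b))" by simp
    have "8 * t + 2 * ((\<Sum>b\<in>J2. x $ kS b) - (\<Sum>b\<in>Itrope a. x $ kS b)) > 0"
    proof -
      define D where "D = (\<Sum>b\<in>J2. x $ kS b) - (\<Sum>b\<in>Itrope a. x $ kS b)"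
      have "-55 \<le> D" using L unfolding D_def .
      then show ?thesis using t unfolding D_def[symmetric] t_def[symmetric] by linarith
    qed
    then show ?thesis using E by simp
  qed
  have WG: "ip x (r_goepel g) > 0" if "goepel g" for g
  proof -
    from that have sub: "g \<subseteq> J2" and c: "card g = 4" by (auto simp: goepel_def)
    have "(-11/2) * card g \<le> (\<Sum>b\<in>g. x $ kS b)"
      by (rule sum_lb) (use finite_subset[OF sub finJ] clo sub in auto)
    moreover have "ip x (r_goepel g) = 4 * t + 2 * (\<Sum>b\<in>g. x $ kS b)"
    proof -
      have "(\<Sum>b\<in>g. ip x (Nd b)) = (\<Sum>b\<in>g. -2 * x $ kS b)" using sub by (intro sum.cong) (auto simp: ip_Nd)
      then show ?thesis unfolding r_goepel_def ip_diff2 ip_sum2 ip_Lam t_def by (simp add: sum_negf sum_distrib_left[symmetric])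
    qed
    ultimately show ?thesis using c t unfolding t_def by simp
  qed
  have WW: "ip x (r_weber w) > 0" if "weber w" for w
  proof -
    from that have sub: "w \<subseteq> J2" and c: "card w = 6" by (auto simp: weber_def)
    have "(-11/2) * card w \<le> (\<Sum>b\<in>w. x $ kS b)"
      by (rule sum_lb) (use finite_subset[OF sub finJ] clo sub in auto)
    moreover have "ip x (r_weber w) = 12 * t + 4 * (\<Sum>b\<in>w. x $ kS b)"
    proof -
      have "(\<Sum>b\<in>w. ip x (Nd b)) = (\<Sum>b\<in>w. -2 * x $ kS b)" using sub by (intro sum.cong) (auto simp: ip_Nd)
      then show ?thesis unfolding r_weber_def ip_diff2 ip_scale2 ip_sum2 ip_Lam t_def by (simp add: sum_negf sum_distrib_left[symmetric])
    qed
    ultimately show ?thesis using c t unfolding t_def by simp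
  qed
  have "\<forall>r\<in>walls. ip x r > 0"
    unfolding walls_def using WN WT WL WS WG WW by auto
  then show ?thesis unfolding Dprime_def Pcone_def using P1 P2 by auto
qed



definition Pset :: "nat set set" where "Pset = {{i, j} | i j. 1 \<le> i \<and> i < j \<and> j \<le> (5::nat)}"

lemma Pset_eq: "Pset = {{1,2},{1,3},{1,4},{1,5},{2,3},{2,4},{2,5},{3,4},{3,5},{4,5}}"
proof -
  have "Pset = (\<lambda>(i,j). {i,j}) ` {(k,l). 1 \<le> k \<and> k < l \<and> l \<le> (5::nat)}"
    unfolding Pset_def by auto
  then show ?thesis unfolding pairs5 by simp
qed

lemma Pset_facts: "Pset \<subseteq> J2" "Pset \<inter> Itrope {} = {}" "card Pset = 10" "finite Pset"
  unfolding Pset_eq J2_eq I0_eq by (simp_all add: doubleton_eq_iff)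

definition fb :: "nat \<Rightarrow> nat set" where "fb i = (if i = 6 then {} else {i, 6})"

lemma fb_I0: "i \<in> {1..6} \<Longrightarrow> fb i \<in> Itrope {}"
proof -
  assume "i \<in> {1..6}"
  then have "i = 1 \<or> i = 2 \<or> i = 3 \<or> i = 4 \<or> i = 5 \<or> i = 6" by auto
  then show ?thesis unfolding fb_def I0_eq by auto
qed

lemma ip_bcls: "ip y bcls = 6 * y $ kN + (\<Sum>i\<in>{1..6}. y $ kS (fb i)) + 2 * (\<Sum>p\<in>Pset. y $ kS p)"
proof -
  have fJ: "fb i \<in> J2" if "i \<in> {1..6}" for i using fb_I0[OF that] I0_sub by auto
  have PJ: "p \<in> J2" if "p \<in> Pset" for p using that Pset_facts(1) by auto
  have a: "(\<Sum>i\<in>{1..6}. ip y (Nd (fb i))) = (\<Sum>i\<in>{1..6}. -2 * y $ kS (fb i))"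
    by (rule sum.cong) (auto simp: ip_Nd fJ)
  have b: "(\<Sum>p\<in>Pset. ip y (Nd p)) = (\<Sum>p\<in>Pset. -2 * y $ kS p)"
    by (rule sum.cong) (auto simp: ip_Nd PJ)
  have bc: "bcls = (1/2) *\<^sub>R (3 *\<^sub>R Lam - (\<Sum>i\<in>{1..6::nat}. Nd (fb i)) - 2 *\<^sub>R (\<Sum>p\<in>Pset. Nd p))"
    unfolding bcls_def fb_def Pset_def by simp
  show ?thesis unfolding bc ip_scale2 ip_diff2 ip_sum2 ip_Lam a b
    by (simp add: sum_distrib_left[symmetric] sum_negf algebra_simps)
qed

lemma ip_Rcls: "ip y Rcls = 2 * y $ kN + (\<Sum>a\<in>Itrope {}. y $ kS a)"
  unfolding Rcls_def by (rule ip_Tr) (simp add: J2_def)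

definition x0 :: NSR where
  "x0 = (\<chi> k. if k = kN then 15 else if k \<in> kS ` Itrope {} then -5 else -3)"

lemma x0_kN: "x0 $ kN = 15" by (simp add: x0_def)
lemma x0_kS: "a \<in> J2 \<Longrightarrow> x0 $ kS a = (if a \<in> Itrope {} then -5 else -3)"
proof -
  assume a: "a \<in> J2"
  have "kS a \<in> kS ` Itrope {} \<longleftrightarrow> a \<in> Itrope {}"
    using a I0_sub kS_inj by blast
  then show ?thesis unfolding x0_def using a kS_ne_kN by simp
qed

lemma x0_AR: "x0 \<in> AR"
proof -
  have r: "ip x0 Rcls = 0"
  proof -
    have "(\<Sum>a\<in>Itrope {}. x0 $ kS a) = (\<Sum>a\<in>Itrope {}. -5)"
      by (rule sum.cong) (use I0_sub x0_kS in auto)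
    then show ?thesis unfolding ip_Rcls x0_kN using card_I0 by simp
  qed
  have "(\<Sum>i\<in>{1..6}. x0 $ kS (fb i)) = (\<Sum>i\<in>{1..6::nat}. -5)"
  proof (rule sum.cong)
    fix i :: nat assume "i \<in> {1..6}"
    then have "fb i \<in> Itrope {}" "fb i \<in> J2" using fb_I0 I0_sub by auto
    then show "x0 $ kS (fb i) = -5" using x0_kS by simp
  qed simp
  moreover have "(\<Sum>p\<in>Pset. x0 $ kS p) = (\<Sum>p\<in>Pset. -3)"
  proof (rule sum.cong)
    fix p assume "p \<in> Pset"
    then have "p \<notin> Itrope {}" "p \<in> J2" using Pset_facts(1,2) by auto
    then show "x0 $ kS p = -3" using x0_kS by simp
  qed simp
  ultimately have "ip x0 bcls = 0" unfolding ip_bcls x0_kN using Pset_facts(3) by simp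
  with r show ?thesis unfolding AR_def by simp
qed

lemma ipG: "ip x y = inner (Gv y) x" using ip_sym[of x y] ip_Gv[of y x] by simp

lemma AR_alt: "AR = {y. inner (Gv bcls) y = 0 \<and> inner (Gv Rcls) y = 0}"
  unfolding AR_def ipG ..

lemma subspace_AR: "subspace AR"
  unfolding AR_alt subspace_def by (simp add: inner_add_right)

lemma dim_AR: "dim AR = 15"
proof -
  define u where "u = Gv bcls"
  define v where "v = Gv Rcls"
  define y0 where "y0 = Nd {1,2}"
  have J12: "{1,2} \<in> J2" by (simp add: J2_eq)
  have n12: "{1,2} \<notin> Itrope {}" by (simp add: I0_eq doubleton_eq_iff)
  have vy0: "inner v y0 = 0"
  proof -
    have "(\<Sum>a\<in>Itrope {}. y0 $ kS a) = 0"
    proof (rule sum.neutral, rule ballI)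
      fix a assume "a \<in> Itrope {}"
      then have "a \<in> J2" "a \<noteq> {1,2}" using I0_sub n12 by auto
      then show "y0 $ kS a = 0" using Nd_kS[OF J12, of a] by (auto simp: y0_def)
    qed
    moreover have "y0 $ kN = 0" unfolding y0_def by (rule Nd_kN[OF J12])
    ultimately show ?thesis unfolding v_def ip_Gv[symmetric] ip_sym[of Rcls] ip_Rcls
      by simp
  qed
  have y0N: "y0 $ kN = 0" unfolding y0_def by (rule Nd_kN[OF J12])
  have uy0: "inner u y0 = 2"
  proof -
    have "(\<Sum>i\<in>{1..6}. y0 $ kS (fb i)) = 0"
    proof (rule sum.neutral, rule ballI)
      fix i :: nat assume "i \<in> {1..6}"
      then have "fb i \<in> Itrope {}" by (rule fb_I0)
      then have "fb i \<in> J2" "fb i \<noteq> {1,2}" using I0_sub n12 by auto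
      then show "y0 $ kS (fb i) = 0" using Nd_kS[OF J12, of "fb i"] by (auto simp: y0_def)
    qed
    moreover have "(\<Sum>p\<in>Pset. y0 $ kS p) = (\<Sum>p\<in>Pset. if p = {1,2} then 1 else 0)"
    proof (rule sum.cong)
      fix p assume "p \<in> Pset"
      then have "p \<in> J2" using Pset_facts(1) by auto
      then show "y0 $ kS p = (if p = {1,2} then 1 else 0)" using Nd_kS[OF J12, of p] by (auto simp: y0_def)
    qed simp
    moreover have "{1,2} \<in> Pset" by (simp add: Pset_eq)
    ultimately show ?thesis unfolding u_def ip_Gv[symmetric] ip_sym[of bcls] ip_bcls
      using Pset_facts(4) y0N by simp
  qed
  have vL: "inner v Lam = 2"
  proof -
    have "(\<Sum>a\<in>Itrope {}. Lam $ kS a) = 0"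
      using I0_sub by (intro sum.neutral) (auto simp: Lam_kS)
    then show ?thesis unfolding v_def ip_Gv[symmetric] ip_sym[of Rcls] ip_Rcls by (simp add: Lam_kN)
  qed
  have v0: "v \<noteq> 0" using vL by auto
  have uspan: "u \<notin> span {v}"
  proof
    assume "u \<in> span {v}"
    then have "orthogonal y0 u"
      by (rule orthogonal_to_span) (use vy0 in \<open>auto simp: orthogonal_def inner_commute\<close>)
    then show False using uy0 by (simp add: orthogonal_def inner_commute)
  qed
  have ind: "independent {u, v}"
    by (intro independent_insertI uspan) (use v0 in \<open>auto intro: independent_insertI simp: independent_empty\<close>)
  have uv: "u \<noteq> v" using uy0 vy0 by auto
  have d2: "dim (span {u, v}) = 2" using dim_eq_card_independent[OF ind] uv by simp
  have eq: "{y \<in> UNIV. \<forall>x \<in> span {u,v}. orthogonal x y} = AR"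
  proof (intro equalityI subsetI)
    fix y assume "y \<in> {y \<in> UNIV. \<forall>x \<in> span {u,v}. orthogonal x y}"
    then have "orthogonal u y" "orthogonal v y" by (auto intro: span_base)
    then show "y \<in> AR" unfolding AR_alt u_def v_def orthogonal_def by simp
  next
    fix y assume "y \<in> AR"
    then have h: "orthogonal y u" "orthogonal y v" unfolding AR_alt u_def v_def orthogonal_def
      by (auto simp: inner_commute)
    have "\<forall>x \<in> span {u,v}. orthogonal x y"
    proof
      fix x assume "x \<in> span {u,v}"
      then have "orthogonal y x" by (rule orthogonal_to_span) (use h in auto)
      then show "orthogonal x y" by (simp add: orthogonal_def inner_commute)
    qed
    then show "y \<in> {y \<in> UNIV. \<forall>x \<in> span {u,v}. orthogonal x y}" by simp
  qed
  have "dim {y \<in> UNIV. \<forall>x \<in> span {u,v}. orthogonal x y} + dim (span {u,v}) = dim (UNIV :: NSR set)"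
    by (rule dim_subspace_orthogonal_to_vectors) auto
  moreover have "dim (UNIV :: NSR set) = 17" using card_kidx by simp
  ultimately show ?thesis using eq d2 by simp
qed



lemma near_closure:
  assumes yA: "y \<in> AR" and d: "dist x0 y < 1/2"
  shows "y \<in> closure Dprime"
proof -
  have cb: "\<bar>y $ k - x0 $ k\<bar> < 1/2" for k
  proof -
    have "\<bar>(y - x0) $ k\<bar> \<le> norm (y - x0)" by (rule component_le_norm_cart)
    also have "\<dots> = dist x0 y" by (simp add: dist_norm norm_minus_commute)
    finally show ?thesis using d by simp
  qed
  have yR: "ip y Rcls = 0" using yA unfolding AR_def by simp
  show ?thesis unfolding closure_approachable
  proof (intro allI impI)
    fix e :: real assume e: "e > 0"
    define \<epsilon> where "\<epsilon> = min (e/2) (1/2)"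
    have ep: "\<epsilon> > 0" "\<epsilon> < e" using e unfolding \<epsilon>_def by auto
    define z where "z = y + \<epsilon> *\<^sub>R Lam"
    have zN: "z $ kN = y $ kN + \<epsilon>" by (simp add: z_def Lam_kN)
    have zS: "z $ kS a = y $ kS a" if "a \<in> J2" for a by (simp add: z_def Lam_kS that)
    have hb: "y $ kS a - x0 $ kS a < 1/2 \<and> x0 $ kS a - y $ kS a < 1/2" for a
      using cb[of "kS a"] unfolding abs_less_iff by linarith
    have "z \<in> Dprime"
    proof (rule good)
      show "29/2 \<le> z $ kN" using cb[of kN] ep zN unfolding x0_kN abs_less_iff by linarith
      show "z $ kS a < 0" if "a \<in> J2" for a using hb[of a] x0_kS[OF that] zS[OF that]
        by (cases "a \<in> Itrope {}") simp_all
      show "-11/2 \<le> z $ kS a" if "a \<in> J2" for a using hb[of a] x0_kS[OF that] zS[OF that]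
        by (cases "a \<in> Itrope {}") simp_all
      show "-7/2 \<le> z $ kS a" if "a \<in> J2" "a \<notin> Itrope {}" for a
        using hb[of a] x0_kS[OF that(1)] zS[OF that(1)] that(2) by simp
      have "(\<Sum>a\<in>Itrope {}. z $ kS a) = (\<Sum>a\<in>Itrope {}. y $ kS a)"
        using I0_sub zS by (intro sum.cong) auto
      then have "ip z Rcls = ip y Rcls + 2 * \<epsilon>" unfolding ip_Rcls zN by simp
      then show "ip z Rcls > 0" using yR ep by simp
    qed
    moreover have "dist z y < e"
      using ep by (simp add: z_def dist_norm Lam_def)
    ultimately show "\<exists>z\<in>Dprime. dist z y < e" by blast
  qed
qed

theorem proposition4p2:
  shows "aff_dim Omega = 15 \<and> dim AR = 15"
proof -
  have s1: "AR \<inter> ball x0 (1/2) \<subseteq> Omega"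
    unfolding Omega_def using near_closure by (auto simp: mem_ball)
  have s2: "Omega \<subseteq> AR" unfolding Omega_def by auto
  have "aff_dim (AR \<inter> ball x0 (1/2)) = aff_dim AR"
    by (rule aff_dim_convex_Int_open) (use subspace_imp_convex[OF subspace_AR] x0_AR in auto)
  moreover have "aff_dim AR = 15" using aff_dim_subspace[OF subspace_AR] dim_AR by simp
  ultimately have "aff_dim Omega = 15"
    using aff_dim_subset[OF s1] aff_dim_subset[OF s2] by linarith
  then show ?thesis using dim_AR by simp
qed


end
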